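(* Dynamic A* with \texttt{reeval} set to true and using a dyn-monotonic, dyn-consistent dynamic heuristic never reopens a state, i.e., it never removes a state from Closed.
   Context: A transition system is $\mathcal T=\langle S,L,c,T,s_I,S_G\rangle$ with finite states $S$, finite labels $L$, cost function $c:L\to\mathbb R_{\ge0}$, transitions $T\subseteq S\times L\times S$, initial state $s_I$, goal states $S_G\subseteq S$. An information source $\sigma$ consists of a set $\mathcal I_\sigma$, $\iota_0^\sigma\in\mathcal I_\sigma$, $\mathrm{update}_\sigma:\mathcal I_\sigma\times T\to\mathcal I_\sigma$, $\mathrm{refine}_\sigma:\mathcal I_\sigma\times S\to\mathcal I_\sigma$. Reachable information: $\iota_n$ is reachable if obtained from $\iota_0^\sigma$ by a sequence of refine steps on states and update steps on transitions $e_1,\dots,e_n$, where each refined state and each origin of an updated transition is $s_I$ or the target of an earlier updated transition. A dynamic heuristic over $\sigma$ is $h:S\times\mathcal I_\sigma\to\mathbb R_{\ge0}\cup\{\infty\}$. It is dyn-consistent if $h(s,\iota)\le c(\ell)+h(s',\iota)$ for all $\langle s,\ell,s'\rangle\in T$ and all reachable $\iota$; and dyn-monotonic if $h(s,\iota)\le h(s,\mathrm{update}_\sigma(\iota,t))$ and $h(s,\iota)\le h(s,\mathrm{refine}_\sigma(\iota,s'))$ for all reachable $\iota$, all $s,s'\in S$, all $t\in T$. Parent source $\sigma_p$: $\mathcal I_{\sigma_p}$ = partial functions $S\rightharpoonup\mathbb R_{\ge0}\times(T\cup\{\bot\})$; $\iota_0=\{s_I\mapsto\langle0,\bot\rangle\}$;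 refine is the identity; $\mathrm{update}(\iota,\langle s,\ell,s'\rangle)$ with $\iota(s)=\langle g,\cdot\rangle$ changes only $s'$, setting it to $\langle g+c(\ell),\langle s,\ell,s'\rangle\rangle$ if $\iota(s')$ is undefined or has $g$-component $\ge g+c(\ell)$, otherwise unchanged. Dynamic A* takes $\mathcal T$, sources $\sigma_p,\sigma_h$, a dynamic heuristic $h$ over $\sigma_h$ and a Boolean flag \texttt{reeval}. Notation: at any moment $g(s)$ is the $g$-component of the current $\mathcal I(\sigma_p)(s)$ and $h(s)$ denotes $h(s,\mathcal I(\sigma_h))$ for the current $\mathcal I(\sigma_h)$. Open is a priority queue of entries $\langle s,g,h\rangle$ (duplicates allowed), popped by minimal stored value $g+h$ (ties arbitrary). Algorithm: 1. $\mathcal I(\sigma):=\iota_0^\sigma$ for both sources; $S_{\mathrm{known}}:=\{s_I\}$; Closed $:=\emptyset$; Open empty. If $h(s_I)<\infty$ insert $\langle s_I,g(s_I),h(s_I)\rangle$. 2. While Open is nonempty: pop an entry $\langle s,\hat g,\hat h\rangle$ of minimal $\hat g+\hat h$. If $s\in$ Closed, continue with the next iteration. Otherwise set $\mathcal I(\sigma):=\mathrm{refine}_\sigma(\mathcal I(\sigma),s)$ for both sources. If \texttt{reeval} is true and $\hat h<h(s)$: if $h(s)<\infty$ insert $\langle s,g(s),h(s)\rangle$; continue with the next iteration (this is a re-evaluation). Otherwise add $s$ to Closed ($s$ is expanded). If $s\in S_G$, return the path obtained by following the parent pointers of $\mathcal I(\sigma_p)$ from $s$ back to $s_I$. Otherwise,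 for each $t=\langle s,\ell,s'\rangle\in T$ in some order: let $old:=g(s')$ if $s'\in S_{\mathrm{known}}$ and undefined otherwise; set $\mathcal I(\sigma):=\mathrm{update}_\sigma(\mathcal I(\sigma),t)$ for both sources; add $s'$ to $S_{\mathrm{known}}$; if $h(s')=\infty$ skip $s'$; else if $old$ is undefined insert $\langle s',g(s'),h(s')\rangle$; else if $old>g(s')$, remove $s'$ from Closed if it is there (reopening) and insert $\langle s',g(s'),h(s')\rangle$. 3. Return "unsolvable". *)

theory Defs
  imports Main "HOL-Library.Extended_Real" "HOL-Library.Multiset"
begin

record ('s, 'l) tsys =
  states :: "'s set"
  labels :: "'l set"
  cost   :: "'l \<Rightarrow> real"
  trans  :: "('s \<times> 'l \<times> 's) set"
  init   :: "'s"
  goals  :: "'s set"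

definition wf_tsys :: "('s, 'l) tsys \<Rightarrow> bool" where
  "wf_tsys \<Theta> \<longleftrightarrow> finite (states \<Theta>) \<and> finite (labels \<Theta>)
     \<and> (\<forall>l \<in> labels \<Theta>. cost \<Theta> l \<ge> 0)
     \<and> trans \<Theta> \<subseteq> states \<Theta> \<times> labels \<Theta> \<times> states \<Theta>
     \<and> init \<Theta> \<in> states \<Theta> \<and> goals \<Theta> \<subseteq> states \<Theta>"

record ('i, 's, 'l) info_source =
  info_set    :: "'i set"
  info_init   :: "'i"
  info_update :: "'i \<Rightarrow> ('s \<times> 'l \<times> 's) \<Rightarrow> 'i"
  info_refine :: "'i \<Rightarrow> 's \<Rightarrow> 'i"

definition wf_source :: "('s, 'l) tsys \<Rightarrow> ('i, 's, 'l) info_source \<Rightarrow> bool" where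
  "wf_source \<Theta> \<sigma> \<longleftrightarrow> info_init \<sigma> \<in> info_set \<sigma>
     \<and> (\<forall>\<iota> \<in> info_set \<sigma>. \<forall>t \<in> trans \<Theta>. info_update \<sigma> \<iota> t \<in> info_set \<sigma>)
     \<and> (\<forall>\<iota> \<in> info_set \<sigma>. \<forall>s \<in> states \<Theta>. info_refine \<sigma> \<iota> s \<in> info_set \<sigma>)"

text \<open>Reachable information: pairs (information, set of states that may be refined /
  may be origins of updates, i.e. s_I and targets of earlier updated transitions).\<close>

inductive reach_info :: "('s, 'l) tsys \<Rightarrow> ('i, 's, 'l) info_source \<Rightarrow> 'i \<Rightarrow> 's set \<Rightarrow> bool"
  for \<Theta> \<sigma> where
  start: "reach_info \<Theta> \<sigma> (info_init \<sigma>) {init \<Theta>}"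
| refine: "reach_info \<Theta> \<sigma> \<iota> K \<Longrightarrow> s \<in> K \<Longrightarrow> reach_info \<Theta> \<sigma> (info_refine \<sigma> \<iota> s) K"
| update: "reach_info \<Theta> \<sigma> \<iota> K \<Longrightarrow> (s, l, s') \<in> trans \<Theta> \<Longrightarrow> s \<in> K \<Longrightarrow>
           reach_info \<Theta> \<sigma> (info_update \<sigma> \<iota> (s, l, s')) (insert s' K)"

definition reachable_info :: "('s, 'l) tsys \<Rightarrow> ('i, 's, 'l) info_source \<Rightarrow> 'i \<Rightarrow> bool" where
  "reachable_info \<Theta> \<sigma> \<iota> \<longleftrightarrow> (\<exists>K. reach_info \<Theta> \<sigma> \<iota> K)"

definition dyn_heuristic :: "('s, 'l) tsys \<Rightarrow> ('i, 's, 'l) info_source \<Rightarrow> ('s \<Rightarrow> 'i \<Rightarrow> ereal) \<Rightarrow> bool" where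
  "dyn_heuristic \<Theta> \<sigma> h \<longleftrightarrow> (\<forall>s \<in> states \<Theta>. \<forall>\<iota> \<in> info_set \<sigma>. 0 \<le> h s \<iota>)"

definition dyn_consistent :: "('s, 'l) tsys \<Rightarrow> ('i, 's, 'l) info_source \<Rightarrow> ('s \<Rightarrow> 'i \<Rightarrow> ereal) \<Rightarrow> bool" where
  "dyn_consistent \<Theta> \<sigma> h \<longleftrightarrow>
     (\<forall>s l s' \<iota>. (s, l, s') \<in> trans \<Theta> \<longrightarrow> reachable_info \<Theta> \<sigma> \<iota> \<longrightarrow>
        h s \<iota> \<le> ereal (cost \<Theta> l) + h s' \<iota>)"

definition dyn_monotonic :: "('s, 'l) tsys \<Rightarrow> ('i, 's, 'l) info_source \<Rightarrow> ('s \<Rightarrow> 'i \<Rightarrow> ereal) \<Rightarrow> bool" where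
  "dyn_monotonic \<Theta> \<sigma> h \<longleftrightarrow>
     (\<forall>\<iota> s. reachable_info \<Theta> \<sigma> \<iota> \<longrightarrow> s \<in> states \<Theta> \<longrightarrow>
        (\<forall>t \<in> trans \<Theta>. h s \<iota> \<le> h s (info_update \<sigma> \<iota> t)) \<and>
        (\<forall>s' \<in> states \<Theta>. h s \<iota> \<le> h s (info_refine \<sigma> \<iota> s')))"

type_synonym ('s, 'l) pinfo = "'s \<rightharpoonup> real \<times> ('s \<times> 'l \<times> 's) option"
  \<comment> \<open>None in the second component encodes \<bottom>\<close>

definition parent_update :: "('s, 'l) tsys \<Rightarrow> ('s, 'l) pinfo \<Rightarrow> ('s \<times> 'l \<times> 's) \<Rightarrow> ('s, 'l) pinfo" where
  "parent_update \<Theta> \<iota> t = (case t of (s, l, s') \<Rightarrow>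
     (case \<iota> s of
        None \<Rightarrow> \<iota>
      | Some (g, _) \<Rightarrow>
          (if \<iota> s' = None \<or> fst (the (\<iota> s')) \<ge> g + cost \<Theta> l
           then \<iota>(s' \<mapsto> (g + cost \<Theta> l, Some (s, l, s'))) else \<iota>)))"

definition parent_source :: "('s, 'l) tsys \<Rightarrow> (('s, 'l) pinfo, 's, 'l) info_source" where
  "parent_source \<Theta> =
     \<lparr> info_set = {\<iota>. dom \<iota> \<subseteq> states \<Theta> \<and>
                      (\<forall>g p. (g, p) \<in> ran \<iota> \<longrightarrow> g \<ge> 0 \<and> (\<forall>t. p = Some t \<longrightarrow> t \<in> trans \<Theta>))},
       info_init = [init \<Theta> \<mapsto> (0, None)],
       info_update = parent_update \<Theta>,
       info_refine = (\<lambda>\<iota> s. \<iota>) \<rparr>"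

definition gval :: "('s, 'l) pinfo \<Rightarrow> 's \<Rightarrow> real" where
  "gval \<iota> s = fst (the (\<iota> s))"

text \<open>The field pending holds the outgoing transitions of the
  currently expanded state that have not yet been processed (they are processed one at a time
  in an arbitrary order). halted is set when a goal state is expanded (the algorithm returns).\<close>

record ('s, 'l, 'i) astar_conf =
  cp      :: "('s, 'l) pinfo"
  ch      :: "'i"
  known   :: "'s set"
  closed  :: "'s set"
  opn     :: "('s \<times> real \<times> ereal) multiset"
  pending :: "('s \<times> 'l \<times> 's) set"
  halted  :: bool

definition astar_init ::
  "('s, 'l) tsys \<Rightarrow> ('i, 's, 'l) info_source \<Rightarrow> ('s \<Rightarrow> 'i \<Rightarrow> ereal) \<Rightarrow> ('s, 'l, 'i) astar_conf" where
  "astar_init \<Theta> \<sigma> h =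
    (let \<iota>p = info_init (parent_source \<Theta>); \<iota>h = info_init \<sigma>; sI = init \<Theta> in
     \<lparr> cp = \<iota>p, ch = \<iota>h, known = {sI}, closed = {},
       opn = (if h sI \<iota>h < \<infinity> then {# (sI, gval \<iota>p sI, h sI \<iota>h) #} else {#}),
       pending = {}, halted = False \<rparr>)"

definition process_trans ::
  "('s, 'l) tsys \<Rightarrow> ('i, 's, 'l) info_source \<Rightarrow> ('s \<Rightarrow> 'i \<Rightarrow> ereal) \<Rightarrow>
   ('s \<times> 'l \<times> 's) \<Rightarrow> ('s, 'l, 'i) astar_conf \<Rightarrow> ('s, 'l, 'i) astar_conf" where
  "process_trans \<Theta> \<sigma> h t C =
    (case t of (s, l, s') \<Rightarrow>
      (let old = (if s' \<in> known C then Some (gval (cp C) s') else None);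
           \<iota>p' = info_update (parent_source \<Theta>) (cp C) t;
           \<iota>h' = info_update \<sigma> (ch C) t;
           C1 = C\<lparr> cp := \<iota>p', ch := \<iota>h', known := insert s' (known C),
                  pending := pending C - {t} \<rparr>;
           hv = h s' \<iota>h'
       in if hv = \<infinity> then C1
          else (case old of
                  None \<Rightarrow> C1\<lparr> opn := opn C + {# (s', gval \<iota>p' s', hv) #} \<rparr>
                | Some og \<Rightarrow>
                    (if og > gval \<iota>p' s'
                     then C1\<lparr> closed := closed C - {s'},
                             opn := opn C + {# (s', gval \<iota>p' s', hv) #} \<rparr>
                     else C1))))"

definition pop_entry ::
  "('s, 'l) tsys \<Rightarrow> ('i, 's, 'l) info_source \<Rightarrow> ('s \<Rightarrow> 'i \<Rightarrow> ereal) \<Rightarrow> bool \<Rightarrow>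
   ('s \<times> real \<times> ereal) \<Rightarrow> ('s, 'l, 'i) astar_conf \<Rightarrow> ('s, 'l, 'i) astar_conf" where
  "pop_entry \<Theta> \<sigma> h reeval e C =
    (case e of (s, gh, hh) \<Rightarrow>
      (let O' = opn C - {# e #} in
       if s \<in> closed C then C\<lparr> opn := O' \<rparr>
       else
         (let \<iota>p' = info_refine (parent_source \<Theta>) (cp C) s;
              \<iota>h' = info_refine \<sigma> (ch C) s;
              hs = h s \<iota>h'
          in if reeval \<and> hh < hs
             then C\<lparr> cp := \<iota>p', ch := \<iota>h',
                     opn := (if hs < \<infinity> then O' + {# (s, gval \<iota>p' s, hs) #} else O') \<rparr>
             else
               (let C2 = C\<lparr> cp := \<iota>p', ch := \<iota>h', opn := O', closed := insert s (closed C) \<rparr>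
                in if s \<in> goals \<Theta> then C2\<lparr> halted := True \<rparr>
                   else C2\<lparr> pending := {t \<in> trans \<Theta>. fst t = s} \<rparr>))))"

definition entry_key :: "('s \<times> real \<times> ereal) \<Rightarrow> ereal" where
  "entry_key e = ereal (fst (snd e)) + snd (snd e)"

inductive astar_step ::
  "('s, 'l) tsys \<Rightarrow> ('i, 's, 'l) info_source \<Rightarrow> ('s \<Rightarrow> 'i \<Rightarrow> ereal) \<Rightarrow> bool \<Rightarrow>
   ('s, 'l, 'i) astar_conf \<Rightarrow> ('s, 'l, 'i) astar_conf \<Rightarrow> bool"
  for \<Theta> \<sigma> h reeval where
  succ: "\<not> halted C \<Longrightarrow> t \<in> pending C \<Longrightarrow>
         astar_step \<Theta> \<sigma> h reeval C (process_trans \<Theta> \<sigma> h t C)"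
| pop: "\<not> halted C \<Longrightarrow> pending C = {} \<Longrightarrow> e \<in># opn C \<Longrightarrow>
        (\<forall>e' \<in># opn C. entry_key e \<le> entry_key e') \<Longrightarrow>
        astar_step \<Theta> \<sigma> h reeval C (pop_entry \<Theta> \<sigma> h reeval e C)"

end

theory Submission
  imports Defs
begin



lemma pt_fields:
  "cp (process_trans \<Theta> \<sigma> h (u,l,v) C) = parent_update \<Theta> (cp C) (u,l,v)"
  "ch (process_trans \<Theta> \<sigma> h (u,l,v) C) = info_update \<sigma> (ch C) (u,l,v)"
  "known (process_trans \<Theta> \<sigma> h (u,l,v) C) = insert v (known C)"
  "pending (process_trans \<Theta> \<sigma> h (u,l,v) C) = pending C - {(u,l,v)}"
  "closed (process_trans \<Theta> \<sigma> h (u,l,v) C) =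
     (if h v (info_update \<sigma> (ch C) (u,l,v)) \<noteq> \<infinity> \<and> v \<in> known C \<and>
         gval (cp C) v > gval (parent_update \<Theta> (cp C) (u,l,v)) v
      then closed C - {v} else closed C)"
  "opn (process_trans \<Theta> \<sigma> h (u,l,v) C) =
     (if h v (info_update \<sigma> (ch C) (u,l,v)) \<noteq> \<infinity> \<and> (v \<notin> known C \<or>
         gval (cp C) v > gval (parent_update \<Theta> (cp C) (u,l,v)) v)
      then opn C + {# (v, gval (parent_update \<Theta> (cp C) (u,l,v)) v, h v (info_update \<sigma> (ch C) (u,l,v))) #} else opn C)"
  by (auto simp: process_trans_def Let_def parent_source_def)

lemma pop_fields:
  assumes "s \<notin> closed C"
  shows
  "cp (pop_entry \<Theta> \<sigma> h True (s,gh,hh) C) = cp C"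
  "ch (pop_entry \<Theta> \<sigma> h True (s,gh,hh) C) = info_refine \<sigma> (ch C) s"
  "known (pop_entry \<Theta> \<sigma> h True (s,gh,hh) C) = known C"
  "pending (pop_entry \<Theta> \<sigma> h True (s,gh,hh) C) = (if hh < h s (info_refine \<sigma> (ch C) s) \<or> s \<in> goals \<Theta> then pending C else {t \<in> trans \<Theta>. fst t = s})"
  "closed (pop_entry \<Theta> \<sigma> h True (s,gh,hh) C) = (if hh < h s (info_refine \<sigma> (ch C) s) then closed C else insert s (closed C))"
  "opn (pop_entry \<Theta> \<sigma> h True (s,gh,hh) C) = (if hh < h s (info_refine \<sigma> (ch C) s) \<and> h s (info_refine \<sigma> (ch C) s) < \<infinity>
      then opn C - {#(s,gh,hh)#} + {#(s, gval (cp C) s, h s (info_refine \<sigma> (ch C) s))#} else opn C - {#(s,gh,hh)#})"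
  using assms by (auto simp: pop_entry_def Let_def parent_source_def)

lemma pop_fields_closed:
  assumes "s \<in> closed C"
  shows "pop_entry \<Theta> \<sigma> h r (s,gh,hh) C = C\<lparr>opn := opn C - {#(s,gh,hh)#}\<rparr>"
  using assms by (auto simp: pop_entry_def Let_def)




lemma pu_other: "w \<noteq> v \<Longrightarrow> parent_update \<Theta> \<iota> (u,l,v) w = \<iota> w"
  by (auto simp: parent_update_def split: option.splits)

lemma pu_v:
  assumes "\<iota> u = Some (gu, p)"
  shows "gval (parent_update \<Theta> \<iota> (u,l,v)) v =
     (if \<iota> v = None \<or> gval \<iota> v \<ge> gu + cost \<Theta> l then gu + cost \<Theta> l else gval \<iota> v)"
  using assms by (auto simp: parent_update_def gval_def)

lemma pu_dom:
  assumes "u \<in> dom \<iota>"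
  shows "dom (parent_update \<Theta> \<iota> (u,l,v)) = insert v (dom \<iota>)"
  using assms by (auto simp: parent_update_def split: option.splits)

lemma pu_dec:
  assumes "w \<in> dom \<iota>"
  shows "gval (parent_update \<Theta> \<iota> (u,l,v)) w \<le> gval \<iota> w"
  using assms by (auto simp: parent_update_def gval_def split: option.splits)

lemma pu_le:
  assumes "u \<in> dom \<iota>"
  shows "gval (parent_update \<Theta> \<iota> (u,l,v)) v \<le> gval \<iota> u + cost \<Theta> l"
  using assms by (auto simp: parent_update_def gval_def split: option.splits)

lemma pu_cases:
  assumes "u \<in> dom \<iota>"
  shows "gval (parent_update \<Theta> \<iota> (u,l,v)) v = gval \<iota> u + cost \<Theta> l \<or>
         gval (parent_update \<Theta> \<iota> (u,l,v)) v = gval \<iota> v"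
  using assms by (auto simp: parent_update_def gval_def split: option.splits)

lemma pu_ge:
  assumes "u \<in> dom \<iota>" "v \<in> dom \<iota>"
  shows "gval (parent_update \<Theta> \<iota> (u,l,v)) v \<ge> min (gval \<iota> v) (gval \<iota> u + cost \<Theta> l)"
  using pu_cases[OF assms(1), of \<Theta> l v] by auto




inductive reachc :: "('s, 'l) tsys \<Rightarrow> 's \<Rightarrow> real \<Rightarrow> bool" for \<Theta> where
  rc0: "reachc \<Theta> (init \<Theta>) 0"
| rcS: "reachc \<Theta> u c \<Longrightarrow> (u,l,v) \<in> trans \<Theta> \<Longrightarrow> reachc \<Theta> v (c + cost \<Theta> l)"

definition inv :: "('s, 'l) tsys \<Rightarrow> ('i, 's, 'l) info_source \<Rightarrow> ('s \<Rightarrow> 'i \<Rightarrow> ereal) \<Rightarrow> ('s, 'l, 'i) astar_conf \<Rightarrow> bool" where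
 "inv \<Theta> \<sigma> h C \<longleftrightarrow>
   known C \<subseteq> states \<Theta> \<and> dom (cp C) = known C \<and> reach_info \<Theta> \<sigma> (ch C) (known C) \<and> ch C \<in> info_set \<sigma> \<and>
   closed C \<subseteq> known C \<and> init \<Theta> \<in> known C \<and>
   (\<forall>e\<in>#opn C. fst e \<in> known C \<and> gval (cp C) (fst e) \<le> fst (snd e) \<and> snd (snd e) < \<infinity>) \<and>
   (\<forall>v\<in>known C - closed C. h v (ch C) < \<infinity> \<longrightarrow>
       (\<exists>e\<in>#opn C. fst e = v \<and> entry_key e \<le> ereal (gval (cp C) v) + h v (ch C))) \<and>
   (halted C \<or> (\<forall>u\<in>closed C. h u (ch C) < \<infinity> \<longrightarrow> (\<forall>l v. (u,l,v) \<in> trans \<Theta> \<longrightarrow> (u,l,v) \<notin> pending C \<longrightarrow>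
        v \<in> known C \<and> gval (cp C) v \<le> gval (cp C) u + cost \<Theta> l))) \<and>
   pending C \<subseteq> trans \<Theta> \<and> fst ` pending C \<subseteq> known C \<and>
   (\<forall>u\<in>closed C. \<forall>c. reachc \<Theta> u c \<longrightarrow> gval (cp C) u \<le> c) \<and>
   (\<forall>u\<in>known C. \<exists>c. reachc \<Theta> u c \<and> c \<le> gval (cp C) u) \<and>
   gval (cp C) (init \<Theta>) \<le> 0"


lemma invD1: "inv \<Theta> \<sigma> h C \<Longrightarrow> known C \<subseteq> states \<Theta>"
  unfolding inv_def by (elim conjE) assumption

lemma invD2: "inv \<Theta> \<sigma> h C \<Longrightarrow> dom (cp C) = known C"
  unfolding inv_def by (elim conjE) assumption

lemma invD3: "inv \<Theta> \<sigma> h C \<Longrightarrow> reach_info \<Theta> \<sigma> (ch C) (known C)"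
  unfolding inv_def by (elim conjE) assumption

lemma invD4: "inv \<Theta> \<sigma> h C \<Longrightarrow> ch C \<in> info_set \<sigma>"
  unfolding inv_def by (elim conjE) assumption

lemma invD5: "inv \<Theta> \<sigma> h C \<Longrightarrow> closed C \<subseteq> known C"
  unfolding inv_def by (elim conjE) assumption

lemma invD6: "inv \<Theta> \<sigma> h C \<Longrightarrow> init \<Theta> \<in> known C"
  unfolding inv_def by (elim conjE) assumption

lemma invD7: "inv \<Theta> \<sigma> h C \<Longrightarrow> \<forall>e\<in>#opn C. fst e \<in> known C \<and> gval (cp C) (fst e) \<le> fst (snd e) \<and> snd (snd e) < \<infinity>"
  unfolding inv_def by (elim conjE) assumption

lemma invD8: "inv \<Theta> \<sigma> h C \<Longrightarrow> \<forall>v\<in>known C - closed C. h v (ch C) < \<infinity> \<longrightarrow>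
       (\<exists>e\<in>#opn C. fst e = v \<and> entry_key e \<le> ereal (gval (cp C) v) + h v (ch C))"
  unfolding inv_def by (elim conjE) assumption

lemma invD9: "inv \<Theta> \<sigma> h C \<Longrightarrow> halted C \<or> (\<forall>u\<in>closed C. h u (ch C) < \<infinity> \<longrightarrow> (\<forall>l v. (u,l,v) \<in> trans \<Theta> \<longrightarrow> (u,l,v) \<notin> pending C \<longrightarrow>
        v \<in> known C \<and> gval (cp C) v \<le> gval (cp C) u + cost \<Theta> l))"
  unfolding inv_def by (elim conjE) assumption

lemma invD10: "inv \<Theta> \<sigma> h C \<Longrightarrow> pending C \<subseteq> trans \<Theta>"
  unfolding inv_def by (elim conjE) assumption

lemma invD11: "inv \<Theta> \<sigma> h C \<Longrightarrow> fst ` pending C \<subseteq> known C"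
  unfolding inv_def by (elim conjE) assumption

lemma invD12: "inv \<Theta> \<sigma> h C \<Longrightarrow> \<forall>u\<in>closed C. \<forall>c. reachc \<Theta> u c \<longrightarrow> gval (cp C) u \<le> c"
  unfolding inv_def by (elim conjE) assumption

lemma invD13: "inv \<Theta> \<sigma> h C \<Longrightarrow> \<forall>u\<in>known C. \<exists>c. reachc \<Theta> u c \<and> c \<le> gval (cp C) u"
  unfolding inv_def by (elim conjE) assumption

lemma invD14: "inv \<Theta> \<sigma> h C \<Longrightarrow> gval (cp C) (init \<Theta>) \<le> 0"
  unfolding inv_def by (elim conjE) assumption

lemmas invD = invD1 invD2 invD3 invD4 invD5 invD6 invD7 invD8 invD9 invD10 invD11 invD12 invD13 invD14

lemma invI: assumes
   "known C \<subseteq> states \<Theta>" "dom (cp C) = known C" "reach_info \<Theta> \<sigma> (ch C) (known C)" "ch C \<in> info_set \<sigma>"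
   "closed C \<subseteq> known C" "init \<Theta> \<in> known C"
   "\<forall>e\<in>#opn C. fst e \<in> known C \<and> gval (cp C) (fst e) \<le> fst (snd e) \<and> snd (snd e) < \<infinity>"
   "\<forall>v\<in>known C - closed C. h v (ch C) < \<infinity> \<longrightarrow>
       (\<exists>e\<in>#opn C. fst e = v \<and> entry_key e \<le> ereal (gval (cp C) v) + h v (ch C))"
   "halted C \<or> (\<forall>u\<in>closed C. h u (ch C) < \<infinity> \<longrightarrow> (\<forall>l v. (u,l,v) \<in> trans \<Theta> \<longrightarrow> (u,l,v) \<notin> pending C \<longrightarrow>
        v \<in> known C \<and> gval (cp C) v \<le> gval (cp C) u + cost \<Theta> l))"
   "pending C \<subseteq> trans \<Theta>" "fst ` pending C \<subseteq> known C"
   "\<forall>u\<in>closed C. \<forall>c. reachc \<Theta> u c \<longrightarrow> gval (cp C) u \<le> c"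
   "\<forall>u\<in>known C. \<exists>c. reachc \<Theta> u c \<and> c \<le> gval (cp C) u"
   "gval (cp C) (init \<Theta>) \<le> 0"
  shows "inv \<Theta> \<sigma> h C"
  unfolding inv_def apply (intro conjI) by (fact assms)+

lemma halted_pt: "halted (process_trans \<Theta> \<sigma> h t C) = halted C"
  by (auto simp: process_trans_def Let_def split: prod.splits option.splits)

context
  fixes \<Theta> :: "('s, 'l) tsys"
    and \<sigma> :: "('i, 's, 'l) info_source"
    and h :: "'s \<Rightarrow> 'i \<Rightarrow> ereal"
  assumes wfT: "wf_tsys \<Theta>"
    and wfS: "wf_source \<Theta> \<sigma>"
    and heu: "dyn_heuristic \<Theta> \<sigma> h"
    and mon: "dyn_monotonic \<Theta> \<sigma> h"
    and con: "dyn_consistent \<Theta> \<sigma> h"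
begin

lemma trS: "(u,l,v) \<in> trans \<Theta> \<Longrightarrow> u \<in> states \<Theta> \<and> v \<in> states \<Theta> \<and> cost \<Theta> l \<ge> 0"
  using wfT unfolding wf_tsys_def by blast

lemma rc_states: "reachc \<Theta> u c \<Longrightarrow> u \<in> states \<Theta>"
  by (induction rule: reachc.induct) (use wfT trS in \<open>auto simp: wf_tsys_def\<close>)

lemma mono_upd: "reach_info \<Theta> \<sigma> \<iota> K \<Longrightarrow> s \<in> states \<Theta> \<Longrightarrow> t \<in> trans \<Theta> \<Longrightarrow> h s \<iota> \<le> h s (info_update \<sigma> \<iota> t)"
  using mon unfolding dyn_monotonic_def reachable_info_def by blast

lemma mono_ref: "reach_info \<Theta> \<sigma> \<iota> K \<Longrightarrow> s \<in> states \<Theta> \<Longrightarrow> s' \<in> states \<Theta> \<Longrightarrow> h s \<iota> \<le> h s (info_refine \<sigma> \<iota> s')"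
  using mon unfolding dyn_monotonic_def reachable_info_def by blast

lemma cons: "reach_info \<Theta> \<sigma> \<iota> K \<Longrightarrow> (s,l,s') \<in> trans \<Theta> \<Longrightarrow> h s \<iota> \<le> ereal (cost \<Theta> l) + h s' \<iota>"
  using con unfolding dyn_consistent_def reachable_info_def by blast

lemma nonneg: "s \<in> states \<Theta> \<Longrightarrow> \<iota> \<in> info_set \<sigma> \<Longrightarrow> 0 \<le> h s \<iota>"
  using heu unfolding dyn_heuristic_def by blast

lemma inv_init: "inv \<Theta> \<sigma> h (astar_init \<Theta> \<sigma> h)"
  using wfT wfS unfolding inv_def astar_init_def
  by (auto simp: Let_def parent_source_def gval_def entry_key_def wf_tsys_def wf_source_def intro: reach_info.start rc0)


lemma noreopen_key:
  assumes I: "inv \<Theta> \<sigma> h C" and t: "(u,l,v) \<in> pending C" and vc: "v \<in> closed C"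
  shows "gval (cp C) v \<le> gval (parent_update \<Theta> (cp C) (u,l,v)) v"
proof -
  note D = invD[OF I]
  have tr: "(u,l,v) \<in> trans \<Theta>" using D(10) t by blast
  have uk: "u \<in> known C" using D(11) t by force
  have ud: "u \<in> dom (cp C)" using D(2) uk by auto
  obtain c where c: "reachc \<Theta> u c" "c \<le> gval (cp C) u" using D(13) uk by blast
  have "reachc \<Theta> v (c + cost \<Theta> l)" using c(1) tr by (rule rcS)
  then have "gval (cp C) v \<le> c + cost \<Theta> l" using D(12) vc by blast
  then show ?thesis using pu_cases[OF ud, of \<Theta> l v] c by auto
qed

lemma closed_pt:
  assumes I: "inv \<Theta> \<sigma> h C" and t: "(u,l,v) \<in> pending C"
  shows "closed (process_trans \<Theta> \<sigma> h (u,l,v) C) = closed C"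
  using noreopen_key[OF I t] unfolding pt_fields by auto

lemma inv_pt:
  assumes I: "inv \<Theta> \<sigma> h C" and t: "(u,l,v) \<in> pending C"
  shows "inv \<Theta> \<sigma> h (process_trans \<Theta> \<sigma> h (u,l,v) C)"
proof -
  note D = invD[OF I]
  let ?C = "process_trans \<Theta> \<sigma> h (u,l,v) C"
  let ?P = "cp C" and ?P' = "parent_update \<Theta> (cp C) (u,l,v)"
  let ?H = "ch C" and ?H' = "info_update \<sigma> (ch C) (u,l,v)"
  have tr: "(u,l,v) \<in> trans \<Theta>" using D(10) t by blast
  have uk: "u \<in> known C" using D(11) t by force
  have ud: "u \<in> dom ?P" using D(2) uk by auto
  have us: "u \<in> states \<Theta>" and vs: "v \<in> states \<Theta>" and cl: "cost \<Theta> l \<ge> 0" using trS[OF tr] by auto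
  have RI: "reach_info \<Theta> \<sigma> ?H (known C)" using D(3) .
  have KS: "known C \<subseteq> states \<Theta>" using D(1) .
  have hinc: "\<And>w. w \<in> states \<Theta> \<Longrightarrow> h w ?H \<le> h w ?H'" using mono_upd[OF RI _ tr] .
  have gdec: "\<And>w. w \<in> known C \<Longrightarrow> gval ?P' w \<le> gval ?P w" proof -
    fix w assume "w \<in> known C" then have "w \<in> dom ?P" using D(2) by simp
    then show "gval ?P' w \<le> gval ?P w" by (rule pu_dec)
  qed
  have goth: "\<And>w. w \<noteq> v \<Longrightarrow> gval ?P' w = gval ?P w" by (simp add: gval_def pu_other)
  have gle: "gval ?P' v \<le> gval ?P u + cost \<Theta> l" by (rule pu_le[OF ud])
  have cl_eq: "closed ?C = closed C" by (rule closed_pt[OF I t])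
  have nr: "gval ?P' v = gval ?P v" if vc: "v \<in> closed C"
  proof -
    have "v \<in> known C" using vc D(5) by blast
    then show ?thesis using noreopen_key[OF I t vc] gdec[of v] by linarith
  qed
  have gnew: "v \<notin> known C \<Longrightarrow> gval ?P' v = gval ?P u + cost \<Theta> l"
  proof -
    assume "v \<notin> known C"
    then have "?P v = None" using D(2) by auto
    moreover obtain gu p where "?P u = Some (gu,p)" using ud by auto
    ultimately show ?thesis using pu_v[of ?P u gu p \<Theta> l v] by (simp add: gval_def)
  qed
  show ?thesis
  proof (rule invI, unfold cl_eq)
    show "known ?C \<subseteq> states \<Theta>" using KS vs by (simp add: pt_fields)
    show "dom (cp ?C) = known ?C" using D(2) ud by (simp add: pt_fields pu_dom)
    show "reach_info \<Theta> \<sigma> (ch ?C) (known ?C)" using RI tr uk by (simp add: pt_fields reach_info.update)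
    show "ch ?C \<in> info_set \<sigma>" using D(4) wfS tr unfolding wf_source_def by (simp add: pt_fields)
    show "closed C \<subseteq> known ?C" using D(5) by (auto simp: pt_fields)
    show "init \<Theta> \<in> known ?C" using D(6) by (auto simp: pt_fields)
    show "\<forall>e\<in>#opn ?C. fst e \<in> known ?C \<and> gval (cp ?C) (fst e) \<le> fst (snd e) \<and> snd (snd e) < \<infinity>"
    proof
      fix e assume e: "e \<in># opn ?C"
      show "fst e \<in> known ?C \<and> gval (cp ?C) (fst e) \<le> fst (snd e) \<and> snd (snd e) < \<infinity>"
      proof (cases "e \<in># opn C")
        case True
        then have "fst e \<in> known C" "gval ?P (fst e) \<le> fst (snd e)" "snd (snd e) < \<infinity>" using D(7) by blast+
        then show ?thesis using gdec[of "fst e"] by (auto simp: pt_fields)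
      next
        case False
        then have "e = (v, gval ?P' v, h v ?H')" "h v ?H' \<noteq> \<infinity>" using e by (auto simp: pt_fields split: if_splits)
        then show ?thesis by (auto simp: pt_fields top.not_eq_extremum)
      qed
    qed
    show "\<forall>w\<in>known ?C - closed C. h w (ch ?C) < \<infinity> \<longrightarrow>
       (\<exists>e\<in>#opn ?C. fst e = w \<and> entry_key e \<le> ereal (gval (cp ?C) w) + h w (ch ?C))"
    proof (intro ballI impI)
      fix w assume w: "w \<in> known ?C - closed C" and hw: "h w (ch ?C) < \<infinity>"
      have hw': "h w ?H' < \<infinity>" using hw by (simp add: pt_fields)
      have sub: "opn C \<subseteq># opn ?C" by (simp add: pt_fields)
      have old: "\<exists>e\<in>#opn ?C. fst e = w \<and> entry_key e \<le> ereal (gval (cp ?C) w) + h w (ch ?C)"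
        if wk: "w \<in> known C" and geq: "gval ?P' w = gval ?P w"
      proof -
        have ws: "w \<in> states \<Theta>" using wk KS by blast
        have "h w ?H < \<infinity>" using hinc[OF ws] hw' by (meson le_less_trans)
        then obtain e where e: "e \<in># opn C" "fst e = w" "entry_key e \<le> ereal (gval ?P w) + h w ?H"
          using D(8) wk w by auto
        have "entry_key e \<le> ereal (gval ?P' w) + h w ?H'" using e(3) geq hinc[OF ws]
          by (metis add_left_mono order_trans)
        then show ?thesis using e sub by (auto simp: pt_fields dest: mset_subset_eqD)
      qed
      show "\<exists>e\<in>#opn ?C. fst e = w \<and> entry_key e \<le> ereal (gval (cp ?C) w) + h w (ch ?C)"
      proof (cases "w = v")
        case False
        then show ?thesis using old w goth by (auto simp: pt_fields)
      next
        case True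
        show ?thesis
        proof (cases "v \<notin> known C \<or> gval ?P v > gval ?P' v")
          case c1: True
          then show ?thesis using True hw' by (auto simp: pt_fields entry_key_def)
        next
          case False
          then have "v \<in> known C" "gval ?P' v = gval ?P v" using gdec[of v] by auto
          then show ?thesis using old True by blast
        qed
      qed
    qed
    show "halted ?C \<or> (\<forall>u'\<in>closed C. h u' (ch ?C) < \<infinity> \<longrightarrow> (\<forall>l' v'. (u',l',v') \<in> trans \<Theta> \<longrightarrow> (u',l',v') \<notin> pending ?C \<longrightarrow>
        v' \<in> known ?C \<and> gval (cp ?C) v' \<le> gval (cp ?C) u' + cost \<Theta> l'))"
    proof (cases "halted C")
      case True then show ?thesis by (simp add: halted_pt)
    next
      case False
      then have I6: "\<forall>u'\<in>closed C. h u' ?H < \<infinity> \<longrightarrow> (\<forall>l' v'. (u',l',v') \<in> trans \<Theta> \<longrightarrow> (u',l',v') \<notin> pending C \<longrightarrow>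
        v' \<in> known C \<and> gval ?P v' \<le> gval ?P u' + cost \<Theta> l')" using D(9) by blast
      have gu': "\<And>u'. u' \<in> closed C \<Longrightarrow> gval ?P' u' = gval ?P u'" using nr goth by metis
      show ?thesis
      proof (rule disjI2, intro ballI impI allI)
        fix u' l' v' assume u': "u' \<in> closed C" and hu: "h u' (ch ?C) < \<infinity>" and tr': "(u',l',v') \<in> trans \<Theta>"
          and np: "(u',l',v') \<notin> pending ?C"
        show "v' \<in> known ?C \<and> gval (cp ?C) v' \<le> gval (cp ?C) u' + cost \<Theta> l'"
        proof (cases "(u',l',v') = (u,l,v)")
          case True
          then have "u' = u" "l' = l" "v' = v" by auto
          moreover have "gval ?P' v \<le> gval ?P' u + cost \<Theta> l"
            using gle gu' u' cl \<open>u' = u\<close> goth by (cases "u = v") auto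
          ultimately show ?thesis by (simp add: pt_fields)
        next
          case False
          then have np0: "(u',l',v') \<notin> pending C" using np by (simp add: pt_fields)
          have u's: "u' \<in> states \<Theta>" using u' D(5) KS by blast
          have "h u' ?H' < \<infinity>" using hu by (simp add: pt_fields)
          then have "h u' ?H < \<infinity>" using hinc[OF u's] by (meson le_less_trans)
          then have "v' \<in> known C" "gval ?P v' \<le> gval ?P u' + cost \<Theta> l'" using I6 u' tr' np0 by blast+
          then show ?thesis using gdec[of v'] gu'[OF u'] by (auto simp: pt_fields)
        qed
      qed
    qed
    show "pending ?C \<subseteq> trans \<Theta>" using D(10) by (auto simp: pt_fields)
    show "fst ` pending ?C \<subseteq> known ?C" using D(11) by (auto simp: pt_fields)
    show "\<forall>u'\<in>closed C. \<forall>c. reachc \<Theta> u' c \<longrightarrow> gval (cp ?C) u' \<le> c"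
    proof (intro ballI allI impI)
      fix u' c assume "u' \<in> closed C" "reachc \<Theta> u' c"
      then show "gval (cp ?C) u' \<le> c" using D(12) D(5) gdec[of u'] by (force simp: pt_fields)
    qed
    show "\<forall>w\<in>known ?C. \<exists>c. reachc \<Theta> w c \<and> c \<le> gval (cp ?C) w"
    proof
      fix w assume w: "w \<in> known ?C"
      obtain c where c: "reachc \<Theta> u c" "c \<le> gval ?P u" using D(13) uk by blast
      have ext: "reachc \<Theta> v (c + cost \<Theta> l)" using c(1) tr by (rule rcS)
      show "\<exists>c. reachc \<Theta> w c \<and> c \<le> gval (cp ?C) w"
      proof (cases "w = v")
        case False
        then have "w \<in> known C" using w by (simp add: pt_fields)
        then show ?thesis using D(13) False goth by (auto simp: pt_fields)
      next
        case True
        show ?thesis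
        proof (cases "v \<in> known C")
          case False
          then show ?thesis using gnew ext c True by (auto simp: pt_fields)
        next
          case vk: True
          show ?thesis using pu_cases[OF ud, of \<Theta> l v]
          proof
            assume "gval ?P' v = gval ?P u + cost \<Theta> l"
            then show ?thesis using ext c True by (auto simp: pt_fields)
          next
            assume "gval ?P' v = gval ?P v"
            then show ?thesis using D(13) vk True by (auto simp: pt_fields)
          qed
        qed
      qed
    qed
    show "gval (cp ?C) (init \<Theta>) \<le> 0" using D(14) D(6) gdec[of "init \<Theta>"] by (simp add: pt_fields)
  qed
qed

end



lemma mem_rm: "b \<noteq> a \<Longrightarrow> b \<in># M \<Longrightarrow> b \<in># M - {#a#}"
  by (simp add: in_diff_count)


context
  fixes \<Theta> :: "('s, 'l) tsys"
    and \<sigma> :: "('i, 's, 'l) info_source"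
    and h :: "'s \<Rightarrow> 'i \<Rightarrow> ereal"
  assumes wfT: "wf_tsys \<Theta>"
    and wfS: "wf_source \<Theta> \<sigma>"
    and heu: "dyn_heuristic \<Theta> \<sigma> h"
    and mon: "dyn_monotonic \<Theta> \<sigma> h"
    and con: "dyn_consistent \<Theta> \<sigma> h"
begin

lemma frontier:
  assumes I: "inv \<Theta> \<sigma> h C" and nh: "\<not> halted C" and np: "pending C = {}"
    and RI: "reach_info \<Theta> \<sigma> \<iota> K"
    and hm: "\<And>w. w \<in> states \<Theta> \<Longrightarrow> h w (ch C) \<le> h w \<iota>"
    and rc: "reachc \<Theta> w c"
  shows "h w \<iota> = \<infinity> \<or> w \<in> closed C \<or>
         (\<exists>v \<in> known C - closed C. ereal (gval (cp C) v) + h v \<iota> \<le> ereal c + h w \<iota>)"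
  using rc
proof (induction rule: reachc.induct)
  case rc0
  have "init \<Theta> \<in> known C" "gval (cp C) (init \<Theta>) \<le> 0" using invD[OF I] by blast+
  moreover have "ereal (gval (cp C) (init \<Theta>)) + h (init \<Theta>) \<iota> \<le> ereal 0 + h (init \<Theta>) \<iota>"
    using calculation by (intro add_right_mono) simp
  ultimately show ?case by (cases "init \<Theta> \<in> closed C") auto
next
  case (rcS u c l v)
  have cs: "h u \<iota> \<le> ereal (cost \<Theta> l) + h v \<iota>" using cons[OF wfT wfS heu mon con RI rcS.hyps(2)] .
  show ?case
  proof (cases "h v \<iota> = \<infinity> \<or> v \<in> closed C")
    case True then show ?thesis by blast
  next
    case False
    then have hv: "h v \<iota> \<noteq> \<infinity>" and vnc: "v \<notin> closed C" by auto
    have hu: "h u \<iota> \<noteq> \<infinity>" using cs hv by auto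
    from rcS.IH hu show ?thesis
    proof (elim disjE)
      assume "h u \<iota> = \<infinity>" then show ?thesis using hu by simp
    next
      assume uc: "u \<in> closed C"
      have gu: "gval (cp C) u \<le> c" using invD(12)[OF I] uc rcS.hyps(1) by blast
      have us: "u \<in> states \<Theta>" using rc_states[OF wfT wfS heu mon con rcS.hyps(1)] .
      have "h u \<iota> < \<infinity>" using hu by (simp add: top.not_eq_extremum)
      then have "h u (ch C) < \<infinity>" using hm[OF us] by (meson le_less_trans)
      then have "v \<in> known C \<and> gval (cp C) v \<le> gval (cp C) u + cost \<Theta> l"
        using invD(9)[OF I] nh np uc rcS.hyps(2) by blast
      then have "v \<in> known C - closed C" "ereal (gval (cp C) v) + h v \<iota> \<le> ereal (c + cost \<Theta> l) + h v \<iota>"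
        using vnc gu by (auto intro!: add_right_mono)
      then show ?thesis by blast
    next
      assume "\<exists>v' \<in> known C - closed C. ereal (gval (cp C) v') + h v' \<iota> \<le> ereal c + h u \<iota>"
      then obtain v' where v': "v' \<in> known C - closed C" "ereal (gval (cp C) v') + h v' \<iota> \<le> ereal c + h u \<iota>" by blast
      have "ereal c + h u \<iota> \<le> ereal c + (ereal (cost \<Theta> l) + h v \<iota>)" using cs by (rule add_left_mono)
      also have "\<dots> = ereal (c + cost \<Theta> l) + h v \<iota>" by (simp add: add.assoc[symmetric])
      finally show ?thesis using v' by (meson order_trans)
    qed
  qed
qed

lemma inv_pop_closed:
  assumes I: "inv \<Theta> \<sigma> h C" and sc: "s \<in> closed C"
  shows "inv \<Theta> \<sigma> h (pop_entry \<Theta> \<sigma> h True (s,gh,hh) C)"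
proof -
  note D = invD[OF I]
  let ?C = "pop_entry \<Theta> \<sigma> h True (s,gh,hh) C"
  have E: "cp ?C = cp C" "ch ?C = ch C" "known ?C = known C" "closed ?C = closed C" "pending ?C = pending C"
    "halted ?C = halted C" "opn ?C = opn C - {#(s,gh,hh)#}"
    by (simp_all add: pop_fields_closed[OF sc])
  show ?thesis
  proof (rule invI, unfold E)
    show "\<forall>e\<in>#opn C - {#(s, gh, hh)#}. fst e \<in> known C \<and> gval (cp C) (fst e) \<le> fst (snd e) \<and> snd (snd e) < \<infinity>"
      using D(7) by (auto dest: in_diffD)
    show "\<forall>v\<in>known C - closed C. h v (ch C) < \<infinity> \<longrightarrow>
       (\<exists>e\<in>#opn C - {#(s, gh, hh)#}. fst e = v \<and> entry_key e \<le> ereal (gval (cp C) v) + h v (ch C))"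
    proof (intro ballI impI)
      fix v assume v: "v \<in> known C - closed C" "h v (ch C) < \<infinity>"
      then obtain e where e: "e \<in># opn C" "fst e = v" "entry_key e \<le> ereal (gval (cp C) v) + h v (ch C)"
        using D(8) by blast
      have "e \<noteq> (s,gh,hh)" using e(2) v(1) sc by auto
      then have "e \<in># opn C - {#(s, gh, hh)#}" using e(1) by (rule mem_rm)
      then show "\<exists>e\<in>#opn C - {#(s, gh, hh)#}. fst e = v \<and> entry_key e \<le> ereal (gval (cp C) v) + h v (ch C)"
        using e(2,3) by blast
    qed
  qed (fact D)+
qed

lemma inv_pop_open:
  assumes I: "inv \<Theta> \<sigma> h C" and nh: "\<not> halted C" and np: "pending C = {}"
    and sc: "s \<notin> closed C" and ein: "(s,gh,hh) \<in># opn C"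
    and emin: "\<forall>e'\<in>#opn C. entry_key (s,gh,hh) \<le> entry_key e'"
  shows "inv \<Theta> \<sigma> h (pop_entry \<Theta> \<sigma> h True (s,gh,hh) C)"
proof -
  note D = invD[OF I]
  let ?C = "pop_entry \<Theta> \<sigma> h True (s,gh,hh) C"
  let ?H = "ch C" and ?H' = "info_refine \<sigma> (ch C) s"
  let ?e = "(s,gh,hh)"
  note F = pop_fields[OF sc]
  have E: "cp ?C = cp C" "ch ?C = ?H'" "known ?C = known C" using F by simp_all
  have sk: "s \<in> known C" and gs: "gval (cp C) s \<le> gh" and hhf: "hh < \<infinity>" using D(7) ein by auto
  have ss: "s \<in> states \<Theta>" using sk D(1) by blast
  have RI': "reach_info \<Theta> \<sigma> ?H' (known C)" using D(3) sk by (rule reach_info.refine)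
  have hinc: "\<And>w. w \<in> states \<Theta> \<Longrightarrow> h w ?H \<le> h w ?H'" using mono_ref[OF wfT wfS heu mon con D(3) _ ss] .
  have H'set: "?H' \<in> info_set \<sigma>" using D(4) wfS ss unfolding wf_source_def by blast
  have I5rm: "\<exists>e\<in>#opn C - {#?e#}. fst e = w \<and> entry_key e \<le> ereal (gval (cp C) w) + h w ?H'"
    if w: "w \<in> known C - closed C" "w \<noteq> s" "h w ?H' < \<infinity>" for w
  proof -
    have ws: "w \<in> states \<Theta>" using w D(1) by blast
    have "h w ?H < \<infinity>" using hinc[OF ws] w(3) by (meson le_less_trans)
    then obtain e where e: "e \<in># opn C" "fst e = w" "entry_key e \<le> ereal (gval (cp C) w) + h w ?H"
      using D(8) w by blast
    have "e \<noteq> ?e" using e(2) w(2) by auto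
    moreover have "entry_key e \<le> ereal (gval (cp C) w) + h w ?H'" using e(3) hinc[OF ws]
      by (metis add_left_mono order_trans)
    ultimately show ?thesis using e(1,2) mem_rm[of e ?e "opn C"] by blast
  qed
  have I6: "\<forall>u\<in>closed C. h u ?H < \<infinity> \<longrightarrow> (\<forall>l v. (u,l,v) \<in> trans \<Theta> \<longrightarrow> (u,l,v) \<notin> pending C \<longrightarrow>
          v \<in> known C \<and> gval (cp C) v \<le> gval (cp C) u + cost \<Theta> l)" using D(9) nh by blast
  have hfin: "\<And>u. u \<in> closed C \<Longrightarrow> h u ?H' < \<infinity> \<Longrightarrow> h u ?H < \<infinity>"
    using hinc D(5) D(1) by (meson le_less_trans subsetD)
  show ?thesis
  proof (cases "hh < h s ?H'")
    case True
    have E2: "closed ?C = closed C" "pending ?C = pending C"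
      "opn ?C = (if h s ?H' < \<infinity> then opn C - {#?e#} + {#(s, gval (cp C) s, h s ?H')#} else opn C - {#?e#})"
      using F True by simp_all
    show ?thesis
    proof (rule invI, unfold E E2)
      show "\<forall>e\<in>#(if h s ?H' < \<infinity> then opn C - {#?e#} + {#(s, gval (cp C) s, h s ?H')#} else opn C - {#?e#}).
          fst e \<in> known C \<and> gval (cp C) (fst e) \<le> fst (snd e) \<and> snd (snd e) < \<infinity>"
        using D(7) sk by (auto dest: in_diffD)
      show "\<forall>v\<in>known C - closed C. h v ?H' < \<infinity> \<longrightarrow>
         (\<exists>e\<in>#(if h s ?H' < \<infinity> then opn C - {#?e#} + {#(s, gval (cp C) s, h s ?H')#} else opn C - {#?e#}).
            fst e = v \<and> entry_key e \<le> ereal (gval (cp C) v) + h v ?H')"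
      proof (intro ballI impI)
        fix v assume v: "v \<in> known C - closed C" "h v ?H' < \<infinity>"
        show "\<exists>e\<in>#(if h s ?H' < \<infinity> then opn C - {#?e#} + {#(s, gval (cp C) s, h s ?H')#} else opn C - {#?e#}).
            fst e = v \<and> entry_key e \<le> ereal (gval (cp C) v) + h v ?H'"
        proof (cases "v = s")
          case True then show ?thesis using v by (auto simp: entry_key_def)
        next
          case False then show ?thesis using I5rm[OF v(1) False v(2)] by auto
        qed
      qed
      show "halted ?C \<or> (\<forall>u\<in>closed C. h u ?H' < \<infinity> \<longrightarrow> (\<forall>l v. (u,l,v) \<in> trans \<Theta> \<longrightarrow> (u,l,v) \<notin> pending C \<longrightarrow>
        v \<in> known C \<and> gval (cp C) v \<le> gval (cp C) u + cost \<Theta> l))"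
        using I6 hfin by blast
      show "reach_info \<Theta> \<sigma> ?H' (known C)" by (rule RI')
      show "?H' \<in> info_set \<sigma>" by (rule H'set)
    qed (fact D)+
  next
    case False
    let ?hs = "h s ?H'"
    let ?pd = "if s \<in> goals \<Theta> then pending C else {t \<in> trans \<Theta>. fst t = s}"
    have E2: "closed ?C = insert s (closed C)" "pending ?C = ?pd" "opn ?C = opn C - {#?e#}"
      using F False by simp_all
    have hs_le: "?hs \<le> hh" using False by simp
    have hs0: "0 \<le> ?hs" using nonneg[OF wfT wfS heu mon con ss H'set] .
    have hsf: "?hs \<noteq> \<infinity>" using hs_le hhf by auto
    have newc: "gval (cp C) s \<le> c" if rc: "reachc \<Theta> s c" for c
    proof -
      have "h s ?H' = \<infinity> \<or> s \<in> closed C \<or>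
         (\<exists>v \<in> known C - closed C. ereal (gval (cp C) v) + h v ?H' \<le> ereal c + h s ?H')"
        by (rule frontier[OF I nh np RI' hinc rc])
      then obtain v where v: "v \<in> known C - closed C" "ereal (gval (cp C) v) + h v ?H' \<le> ereal c + ?hs"
        using hsf sc by blast
      have vs: "v \<in> states \<Theta>" using v D(1) by blast
      have "ereal c + ?hs < \<infinity>" using hsf by (cases ?hs) auto
      then have hvf: "h v ?H' < \<infinity>" using v(2) by (cases "h v ?H'") auto
      then have "h v ?H < \<infinity>" using hinc[OF vs] by (meson le_less_trans)
      then obtain e' where e': "e' \<in># opn C" "entry_key e' \<le> ereal (gval (cp C) v) + h v ?H"
        using D(8) v(1) by blast
      have "ereal gh + ?hs \<le> ereal gh + hh" using hs_le by (rule add_left_mono)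
      also have "\<dots> = entry_key ?e" by (simp add: entry_key_def)
      also have "\<dots> \<le> entry_key e'" using emin e'(1) by blast
      also have "\<dots> \<le> ereal (gval (cp C) v) + h v ?H'" using e'(2) hinc[OF vs] by (metis add_left_mono order_trans)
      also have "\<dots> \<le> ereal c + ?hs" by (rule v(2))
      finally have "ereal gh + ?hs \<le> ereal c + ?hs" .
      then have "gh \<le> c" using hsf hs0 by (cases ?hs) auto
      then show ?thesis using gs by linarith
    qed
    show ?thesis
    proof (rule invI, unfold E E2)
      show "\<forall>e\<in>#opn C - {#?e#}. fst e \<in> known C \<and> gval (cp C) (fst e) \<le> fst (snd e) \<and> snd (snd e) < \<infinity>"
        using D(7) by (auto dest: in_diffD)
      show "\<forall>v\<in>known C - insert s (closed C). h v ?H' < \<infinity> \<longrightarrow>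
         (\<exists>e\<in>#opn C - {#?e#}. fst e = v \<and> entry_key e \<le> ereal (gval (cp C) v) + h v ?H')"
        using I5rm by blast
      show "halted ?C \<or> (\<forall>u\<in>insert s (closed C). h u ?H' < \<infinity> \<longrightarrow> (\<forall>l v. (u,l,v) \<in> trans \<Theta> \<longrightarrow>
        (u,l,v) \<notin> ?pd \<longrightarrow> v \<in> known C \<and> gval (cp C) v \<le> gval (cp C) u + cost \<Theta> l))"
      proof (cases "s \<in> goals \<Theta>")
        case True
        then show ?thesis using sc False by (simp add: pop_entry_def Let_def)
      next
        case False
        then show ?thesis using I6 hfin np by auto
      qed
      show "insert s (closed C) \<subseteq> known C" using sk D(5) by blast
      show "?pd \<subseteq> trans \<Theta>" using D(10) by auto
      show "fst ` ?pd \<subseteq> known C" using D(11) sk by auto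
      show "\<forall>u\<in>insert s (closed C). \<forall>c. reachc \<Theta> u c \<longrightarrow> gval (cp C) u \<le> c" using D(12) newc by blast
      show "reach_info \<Theta> \<sigma> ?H' (known C)" by (rule RI')
      show "?H' \<in> info_set \<sigma>" by (rule H'set)
    qed (fact D)+
  qed
qed

end



lemma inv_reach:
  assumes wfT: "wf_tsys \<Theta>" and wfS: "wf_source \<Theta> \<sigma>" and heu: "dyn_heuristic \<Theta> \<sigma> h"
    and mon: "dyn_monotonic \<Theta> \<sigma> h" and con: "dyn_consistent \<Theta> \<sigma> h"
    and r: "(astar_step \<Theta> \<sigma> h True)\<^sup>*\<^sup>* (astar_init \<Theta> \<sigma> h) C"
  shows "inv \<Theta> \<sigma> h C"
  using r
proof (induction rule: rtranclp_induct)
  case base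
  then show ?case by (rule inv_init[OF wfT wfS heu mon con])
next
  case (step C C')
  from step.hyps(2) show ?case
  proof cases
    case (succ t)
    obtain u l v where t: "t = (u,l,v)" by (cases t) auto
    show ?thesis using inv_pt[OF wfT wfS heu mon con step.IH succ(3)[unfolded t]] succ(1) t by simp
  next
    case (pop e)
    obtain s gh hh where e: "e = (s,gh,hh)" by (cases e) auto
    show ?thesis
    proof (cases "s \<in> closed C")
      case True
      then show ?thesis using inv_pop_closed[OF wfT wfS heu mon con step.IH True] pop(1) e by simp
    next
      case False
      then show ?thesis
        using inv_pop_open[OF wfT wfS heu mon con step.IH pop(2) pop(3) False] pop e by simp
    qed
  qed
qed

theorem theorem7:
  fixes \<Theta> :: "('s, 'l) tsys"
    and \<sigma> :: "('i, 's, 'l) info_source"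
    and h :: "'s \<Rightarrow> 'i \<Rightarrow> ereal"
  assumes "wf_tsys \<Theta>"
    and "wf_source \<Theta> \<sigma>"
    and "dyn_heuristic \<Theta> \<sigma> h"
    and "dyn_monotonic \<Theta> \<sigma> h"
    and "dyn_consistent \<Theta> \<sigma> h"
    and "(astar_step \<Theta> \<sigma> h True)\<^sup>*\<^sup>* (astar_init \<Theta> \<sigma> h) C"
    and "astar_step \<Theta> \<sigma> h True C C'"
  shows "closed C \<subseteq> closed C'"
proof -
  have I: "inv \<Theta> \<sigma> h C" using inv_reach[OF assms(1-6)] .
  from assms(7) show ?thesis
  proof cases
    case (succ t)
    obtain u l v where t: "t = (u,l,v)" by (cases t) auto
    show ?thesis using closed_pt[OF assms(1-5) I succ(3)[unfolded t]] succ(1) t by simp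
  next
    case (pop e)
    obtain s gh hh where e: "e = (s,gh,hh)" by (cases e) auto
    show ?thesis
    proof (cases "s \<in> closed C")
      case True
      then show ?thesis using pop(1) e by (simp add: pop_fields_closed)
    next
      case False
      then show ?thesis using pop(1) e by (auto simp: pop_fields)
    qed
  qed
qed


end
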